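(* A topological partial action is free if and only if its enveloping action is free.
   Context: A topological partial action $\tau=(\{Y_t\}_{t\in H},\{\tau_t\}_{t\in H})$ of a topological group $H$ on a space $Y$: open $Y_t\subseteq Y$, homeomorphisms $\tau_t\colon Y_{t^{-1}}\to Y_t$, $Y_e=Y$, $\tau_e=\mathrm{id}$, $\tau_s(Y_{s^{-1}}\cap Y_t)=Y_s\cap Y_{st}$, $\tau_s\tau_t=\tau_{st}$ on $Y_{t^{-1}}\cap Y_{t^{-1}s^{-1}}$, with $\{(t,y):y\in Y_{t^{-1}}\}$ open and $(t,y)\mapsto\tau_t(y)$ continuous. It is free if for all $t\neq e$ the set $\{y\in Y_{t^{-1}}:\tau_t(y)=y\}$ is empty (for a global action, $Y_t=Y$ for all $t$). The enveloping action $\tau^e$ is (up to isomorphism) the global action of $H$ on a space $Y^e$ such that $Y$ is open in $Y^e$, $Y_t=Y\cap\tau^e_t(Y)$, $\tau_t=\tau^e_t$ on $Y_{t^{-1}}$, and $Y^e=\bigcup_t\tau^e_t(Y)$. *)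

theory Defs
  imports "HOL-Analysis.Analysis" "HOL-Algebra.Group"
begin

definition topological_group :: "('a, 'm) monoid_scheme \<Rightarrow> 'a topology \<Rightarrow> bool" where
  "topological_group G TG \<longleftrightarrow> group G \<and> topspace TG = carrier G
     \<and> continuous_map (prod_topology TG TG) TG (\<lambda>(x, y). x \<otimes>\<^bsub>G\<^esub> y)
     \<and> continuous_map TG TG (\<lambda>x. inv\<^bsub>G\<^esub> x)"

text \<open>Topological partial action of (G, TG) on the space TY, given by the
  domains D t (= Y_t) and maps th t (= tau_t : Y_{t^-1} -> Y_t).\<close>
definition topological_partial_action ::
  "('a, 'm) monoid_scheme \<Rightarrow> 'a topology \<Rightarrow> 'b topology \<Rightarrow> ('a \<Rightarrow> 'b set) \<Rightarrow> ('a \<Rightarrow> 'b \<Rightarrow> 'b) \<Rightarrow> bool" where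
  "topological_partial_action G TG TY D th \<longleftrightarrow>
     topological_group G TG
     \<and> (\<forall>t\<in>carrier G. openin TY (D t))
     \<and> (\<forall>t\<in>carrier G. homeomorphic_map (subtopology TY (D (inv\<^bsub>G\<^esub> t))) (subtopology TY (D t)) (th t))
     \<and> D \<one>\<^bsub>G\<^esub> = topspace TY
     \<and> (\<forall>y\<in>topspace TY. th \<one>\<^bsub>G\<^esub> y = y)
     \<and> (\<forall>s\<in>carrier G. \<forall>t\<in>carrier G.
          th s ` (D (inv\<^bsub>G\<^esub> s) \<inter> D t) = D s \<inter> D (s \<otimes>\<^bsub>G\<^esub> t))
     \<and> (\<forall>s\<in>carrier G. \<forall>t\<in>carrier G.
          \<forall>y \<in> D (inv\<^bsub>G\<^esub> t) \<inter> D (inv\<^bsub>G\<^esub> t \<otimes>\<^bsub>G\<^esub> inv\<^bsub>G\<^esub> s).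
             th s (th t y) = th (s \<otimes>\<^bsub>G\<^esub> t) y)
     \<and> openin (prod_topology TG TY) {(t, y). t \<in> carrier G \<and> y \<in> D (inv\<^bsub>G\<^esub> t)}
     \<and> continuous_map
         (subtopology (prod_topology TG TY) {(t, y). t \<in> carrier G \<and> y \<in> D (inv\<^bsub>G\<^esub> t)})
         TY (\<lambda>(t, y). th t y)"

definition topological_global_action ::
  "('a, 'm) monoid_scheme \<Rightarrow> 'a topology \<Rightarrow> 'c topology \<Rightarrow> ('a \<Rightarrow> 'c \<Rightarrow> 'c) \<Rightarrow> bool" where
  "topological_global_action G TG TZ sg \<longleftrightarrow>
     topological_partial_action G TG TZ (\<lambda>_. topspace TZ) sg"

definition free_partial_action ::
  "('a, 'm) monoid_scheme \<Rightarrow> ('a \<Rightarrow> 'b set) \<Rightarrow> ('a \<Rightarrow> 'b \<Rightarrow> 'b) \<Rightarrow> bool" where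
  "free_partial_action G D th \<longleftrightarrow>
     (\<forall>t\<in>carrier G. t \<noteq> \<one>\<^bsub>G\<^esub> \<longrightarrow> {y \<in> D (inv\<^bsub>G\<^esub> t). th t y = y} = {})"

definition free_global_action ::
  "('a, 'm) monoid_scheme \<Rightarrow> 'c topology \<Rightarrow> ('a \<Rightarrow> 'c \<Rightarrow> 'c) \<Rightarrow> bool" where
  "free_global_action G TZ sg \<longleftrightarrow> free_partial_action G (\<lambda>_. topspace TZ) sg"

text \<open>(TZ, sg) together with the open embedding i : Y -> Z is an enveloping action
  of the partial action (D, th) on TY (Y identified with its image i(Y)).\<close>
definition enveloping_action ::
  "('a, 'm) monoid_scheme \<Rightarrow> 'a topology \<Rightarrow> 'b topology \<Rightarrow> ('a \<Rightarrow> 'b set) \<Rightarrow> ('a \<Rightarrow> 'b \<Rightarrow> 'b)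
   \<Rightarrow> 'c topology \<Rightarrow> ('a \<Rightarrow> 'c \<Rightarrow> 'c) \<Rightarrow> ('b \<Rightarrow> 'c) \<Rightarrow> bool" where
  "enveloping_action G TG TY D th TZ sg i \<longleftrightarrow>
     topological_global_action G TG TZ sg
     \<and> embedding_map TY TZ i
     \<and> openin TZ (i ` topspace TY)
     \<and> (\<forall>t\<in>carrier G. i ` D t = i ` topspace TY \<inter> sg t ` (i ` topspace TY))
     \<and> (\<forall>t\<in>carrier G. \<forall>y\<in>D (inv\<^bsub>G\<^esub> t). i (th t y) = sg t (i y))
     \<and> topspace TZ = (\<Union>t\<in>carrier G. sg t ` (i ` topspace TY))"

end

theory Submission
  imports Defs
begin

theorem proposition3p3:
  fixes G :: "('a, 'm) monoid_scheme" and TG :: "'a topology"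
    and TY :: "'b topology" and D :: "'a \<Rightarrow> 'b set" and th :: "'a \<Rightarrow> 'b \<Rightarrow> 'b"
    and TZ :: "'c topology" and sg :: "'a \<Rightarrow> 'c \<Rightarrow> 'c" and i :: "'b \<Rightarrow> 'c"
  assumes "topological_partial_action G TG TY D th"
    and "enveloping_action G TG TY D th TZ sg i"
  shows "free_partial_action G D th \<longleftrightarrow> free_global_action G TZ sg"
proof -
  have P: "group G" "\<And>t. t \<in> carrier G \<Longrightarrow> openin TY (D t)"
    "\<And>t. t \<in> carrier G \<Longrightarrow> homeomorphic_map (subtopology TY (D (inv\<^bsub>G\<^esub> t))) (subtopology TY (D t)) (th t)"
    using assms(1) unfolding topological_partial_action_def topological_group_def
    by (simp_all only: )
  have grp: "group G" by (rule P(1))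
  interpret G: group G by (rule grp)
  have Gl: "\<And>s t z. s \<in> carrier G \<Longrightarrow> t \<in> carrier G \<Longrightarrow> z \<in> topspace TZ \<Longrightarrow>
      sg s (sg t z) = sg (s \<otimes>\<^bsub>G\<^esub> t) z"
    "\<And>z. z \<in> topspace TZ \<Longrightarrow> sg \<one>\<^bsub>G\<^esub> z = z"
    using assms(2) unfolding enveloping_action_def topological_global_action_def topological_partial_action_def
    by (simp_all only: Int_absorb)
  have emb: "embedding_map TY TZ i"
    and envD: "\<And>t. t \<in> carrier G \<Longrightarrow> i ` D t = i ` topspace TY \<inter> sg t ` (i ` topspace TY)"
    and env_i: "\<And>t y. t \<in> carrier G \<Longrightarrow> y \<in> D (inv\<^bsub>G\<^esub> t) \<Longrightarrow> i (th t y) = sg t (i y)"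
    and cover: "topspace TZ = (\<Union>t\<in>carrier G. sg t ` (i ` topspace TY))"
    using assms(2) unfolding enveloping_action_def by (simp_all only: )
  have inj: "inj_on i (topspace TY)"
    using emb embedding_map_def homeomorphic_imp_injective_map by blast
  have iZ: "i ` topspace TY \<subseteq> topspace TZ"
    using emb embedding_map_def homeomorphic_imp_surjective_map by fastforce
  have Dsub: "\<And>t. t \<in> carrier G \<Longrightarrow> D t \<subseteq> topspace TY"
    using P(2) openin_subset by blast
  have thD: "\<And>t y. t \<in> carrier G \<Longrightarrow> y \<in> D (inv\<^bsub>G\<^esub> t) \<Longrightarrow> th t y \<in> D t"
  proof -
    fix t y assume t: "t \<in> carrier G" and y: "y \<in> D (inv\<^bsub>G\<^esub> t)"
    have "homeomorphic_map (subtopology TY (D (inv\<^bsub>G\<^esub> t))) (subtopology TY (D t)) (th t)"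
      using P(3) t by blast
    then have "th t ` topspace (subtopology TY (D (inv\<^bsub>G\<^esub> t))) = topspace (subtopology TY (D t))"
      using homeomorphic_imp_surjective_map by blast
    moreover have "D (inv\<^bsub>G\<^esub> t) \<subseteq> topspace TY" "D t \<subseteq> topspace TY"
      using Dsub t grp by auto
    ultimately show "th t y \<in> D t" using y
      by (metis image_eqI inf.absorb_iff2 topspace_subtopology)
  qed
  show ?thesis
  proof
    assume fp: "free_partial_action G D th"
    show "free_global_action G TZ sg"
      unfolding free_global_action_def free_partial_action_def
    proof (intro ballI impI)
      fix t assume t: "t \<in> carrier G" and t1: "t \<noteq> \<one>\<^bsub>G\<^esub>"
      show "{y \<in> topspace TZ. sg t y = y} = {}"
      proof (rule ccontr)
        assume "{y \<in> topspace TZ. sg t y = y} \<noteq> {}"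
        then obtain z where z: "z \<in> topspace TZ" "sg t z = z" by blast
        then obtain s y where s: "s \<in> carrier G" and y: "y \<in> topspace TY" and zs: "z = sg s (i y)"
          using cover by auto
        have iy: "i y \<in> topspace TZ" using iZ y by blast
        define u where "u = inv\<^bsub>G\<^esub> s \<otimes>\<^bsub>G\<^esub> t \<otimes>\<^bsub>G\<^esub> s"
        have si: "inv\<^bsub>G\<^esub> s \<in> carrier G" using grp s by simp
        have u: "u \<in> carrier G" using grp s t u_def by simp
        have ui: "inv\<^bsub>G\<^esub> u \<in> carrier G" using grp u by simp
        have u1: "u \<noteq> \<one>\<^bsub>G\<^esub>"
        proof
          assume "u = \<one>\<^bsub>G\<^esub>"
          then have "s \<otimes>\<^bsub>G\<^esub> u \<otimes>\<^bsub>G\<^esub> inv\<^bsub>G\<^esub> s = \<one>\<^bsub>G\<^esub>" using grp s by simp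
          moreover have "s \<otimes>\<^bsub>G\<^esub> u \<otimes>\<^bsub>G\<^esub> inv\<^bsub>G\<^esub> s = t" unfolding u_def
            using grp s t by (simp add: G.m_assoc G.l_inv G.r_inv flip: G.m_assoc[of s])
          ultimately show False using t1 by simp
        qed
        have szs: "sg s (i y) \<in> topspace TZ" using zs z by simp
        have tz: "sg t (sg s (i y)) \<in> topspace TZ" using z zs by simp
        have "sg u (i y) = sg (inv\<^bsub>G\<^esub> s) (sg t (sg s (i y)))"
          unfolding u_def using Gl(1)[OF t s iy] Gl(1)[of "inv\<^bsub>G\<^esub> s" "t \<otimes>\<^bsub>G\<^esub> s", OF si _ iy] s t si
          by (simp add: G.m_assoc)
        also have "\<dots> = sg (inv\<^bsub>G\<^esub> s) (sg s (i y))" using z zs by simp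
        also have "\<dots> = i y" using Gl(1)[OF si s iy] grp s Gl(2)[OF iy] by simp
        finally have fix1: "sg u (i y) = i y" .
        have "sg (inv\<^bsub>G\<^esub> u) (i y) = sg (inv\<^bsub>G\<^esub> u) (sg u (i y))" using fix1 by simp
        also have "\<dots> = i y" using Gl(1)[OF ui u iy] grp u Gl(2)[OF iy] by simp
        finally have "i y \<in> sg (inv\<^bsub>G\<^esub> u) ` (i ` topspace TY)" using y by (metis image_eqI)
        then have "i y \<in> i ` D (inv\<^bsub>G\<^esub> u)" using envD[OF ui] y by blast
        then obtain y' where y': "y' \<in> D (inv\<^bsub>G\<^esub> u)" "i y' = i y" by auto
        have "y' = y" using inj y' y Dsub[OF ui] by (meson inj_onD subsetD)
        then have yD: "y \<in> D (inv\<^bsub>G\<^esub> u)" using y' by simp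
        have "i (th u y) = i y" using env_i[OF u yD] fix1 by simp
        moreover have "th u y \<in> topspace TY" using thD[OF u yD] Dsub[OF u] by blast
        ultimately have "th u y = y" using inj y by (meson inj_onD)
        then show False using fp u u1 yD unfolding free_partial_action_def by blast
      qed
    qed
  next
    assume fg: "free_global_action G TZ sg"
    show "free_partial_action G D th"
      unfolding free_partial_action_def
    proof (intro ballI impI)
      fix t assume t: "t \<in> carrier G" and t1: "t \<noteq> \<one>\<^bsub>G\<^esub>"
      show "{y \<in> D (inv\<^bsub>G\<^esub> t). th t y = y} = {}"
      proof (rule ccontr)
        assume "{y \<in> D (inv\<^bsub>G\<^esub> t). th t y = y} \<noteq> {}"
        then obtain y where y: "y \<in> D (inv\<^bsub>G\<^esub> t)" "th t y = y" by blast
        have "inv\<^bsub>G\<^esub> t \<in> carrier G" using grp t by simp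
        then have "i y \<in> topspace TZ" using y Dsub iZ by blast
        moreover have "sg t (i y) = i y" using env_i[OF t y(1)] y(2) by simp
        ultimately show False using fg t t1 unfolding free_global_action_def free_partial_action_def by blast
      qed
    qed
  qed
qed

end
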